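(* Let $a\neq b$ be decimal digits, let $K\ge 1$ be an integer, and let $N=K\cdot 10^6+\overline{aaaaab}$, i.e. $N$ is the integer whose decimal representation is that of $K$ followed by the six digits $a,a,a,a,a,b$. If $N$ is an absolute prime, then $7\mid K$.
   Context: For a positive integer $N$ with decimal representation $d_1d_2\dots d_n$ (digits $d_k\in\{0,\dots,9\}$, $d_1\neq 0$), a permutation of the digits of $N$ is any integer $\sum_{k=1}^{n} d_{\sigma(k)}10^{n-k}$ with $\sigma$ a permutation of $\{1,\dots,n\}$. $N$ is called an absolute prime if every integer obtained by a permutation of the digits of $N$ (including $N$ itself) is prime. The notation $\overline{c_1c_2\dots c_m}$ denotes $\sum_{k=1}^m c_k10^{m-k}$. *)

theory Defs
  imports "HOL-Computational_Algebra.Primes" "HOL-Combinatorics.Permutations"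
begin

fun digits10 :: "nat \<Rightarrow> nat list" where
  "digits10 n = (if n < 10 then [n] else digits10 (n div 10) @ [n mod 10])"

text \<open>N is an absolute prime if every number obtained by permuting its
  decimal digits (sum over k of d_(sigma k) * 10^(n-k), 1-indexed; here 0-indexed)
  is prime.\<close>
definition absolute_prime :: "nat \<Rightarrow> bool" where
  "absolute_prime N \<longleftrightarrow> N > 0 \<and>
     (let ds = digits10 N; n = length ds in
      \<forall>\<sigma>. \<sigma> permutes {..<n} \<longrightarrow>
            prime (\<Sum>k<n. ds ! (\<sigma> k) * 10 ^ (n - 1 - k)))"

end

theory Submission
  imports Defs
begin

definition vl :: "nat list \<Rightarrow> nat" where
  "vl xs = foldl (\<lambda>acc d. 10 * acc + d) 0 xs"

lemma vl_snoc[simp]: "vl (xs @ [d]) = 10 * vl xs + d"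
  by (simp add: vl_def)

lemma vl_Nil[simp]: "vl [] = 0" by (simp add: vl_def)

lemma vl_append: "vl (xs @ ys) = vl xs * 10 ^ length ys + vl ys"
proof (induction ys rule: rev_induct)
  case Nil then show ?case by simp
next
  case (snoc y ys)
  have "vl (xs @ ys @ [y]) = 10 * vl (xs @ ys) + y" using vl_snoc[of "xs @ ys" y] by simp
  then show ?case using snoc by (simp add: algebra_simps)
qed

lemma vl_digits: "vl (digits10 n) = n"
proof (induction n rule: digits10.induct)
  case (1 n)
  show ?case
  proof (cases "n < 10")
    case True then show ?thesis by (subst digits10.simps) (simp add: vl_def)
  next
    case False
    then have "digits10 n = digits10 (n div 10) @ [n mod 10]" by (subst digits10.simps) simp
    then show ?thesis using 1 False by simp
  qed
qed

lemma sum_vl: "(\<Sum>k<length ds. ds ! k * 10 ^ (length ds - 1 - k)) = vl ds"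
proof (induction ds rule: rev_induct)
  case Nil then show ?case by simp
next
  case (snoc x xs)
  let ?l = "length xs"
  have "(\<Sum>k<length (xs @ [x]). (xs @ [x]) ! k * 10 ^ (length (xs @ [x]) - 1 - k))
      = (\<Sum>k<?l. (xs @ [x]) ! k * 10 ^ (?l - k)) + x"
    by simp
  also have "(\<Sum>k<?l. (xs @ [x]) ! k * 10 ^ (?l - k)) = (\<Sum>k<?l. 10 * (xs ! k * 10 ^ (?l - 1 - k)))"
  proof (rule sum.cong)
    fix k assume "k \<in> {..<?l}"
    then have k: "k < ?l" by simp
    then have "?l - k = Suc (?l - 1 - k)" by simp
    then show "(xs @ [x]) ! k * 10 ^ (?l - k) = 10 * (xs ! k * 10 ^ (?l - 1 - k))"
      using k by (simp add: nth_append)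
  qed simp
  also have "\<dots> = 10 * vl xs" using snoc by (simp add: sum_distrib_left[symmetric])
  finally show ?case by simp
qed

lemma swap_sum:
  assumes "i < length ds" "j < length ds"
  shows "(\<Sum>k<length ds. ds ! (Transposition.transpose i j k) * 10 ^ (length ds - 1 - k))
       = vl (ds[i := ds ! j, j := ds ! i])"
proof -
  have "(\<Sum>k<length ds. ds ! (Transposition.transpose i j k) * 10 ^ (length ds - 1 - k))
     = (\<Sum>k<length (ds[i := ds ! j, j := ds ! i]). (ds[i := ds ! j, j := ds ! i]) ! k
           * 10 ^ (length (ds[i := ds ! j, j := ds ! i]) - 1 - k))"
  proof (rule sum.cong)
    fix k assume "k \<in> {..<length (ds[i := ds ! j, j := ds ! i])}"
    then have k: "k < length ds" by simp
    show "ds ! (Transposition.transpose i j k) * 10 ^ (length ds - 1 - k) =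
      (ds[i := ds ! j, j := ds ! i]) ! k * 10 ^ (length (ds[i := ds ! j, j := ds ! i]) - 1 - k)"
      using k assms by (auto simp: Transposition.transpose_def nth_list_update)
  qed simp
  then show ?thesis using sum_vl[of "ds[i := ds ! j, j := ds ! i]"] by simp
qed

lemma digits_step: "K \<ge> 1 \<Longrightarrow> d < 10 \<Longrightarrow> digits10 (10 * K + d) = digits10 K @ [d]"
  by (subst digits10.simps) simp

declare digits10.simps[simp del]

lemma ten: "(a::nat) < 10 \<Longrightarrow> a = 0 \<or> a = 1 \<or> a = 2 \<or> a = 3 \<or> a = 4 \<or> a = 5 \<or> a = 6 \<or> a = 7 \<or> a = 8 \<or> a = 9" by auto
lemma seven: "(a::nat) < 7 \<Longrightarrow> a = 0 \<or> a = 1 \<or> a = 2 \<or> a = 3 \<or> a = 4 \<or> a = 5 \<or> a = 6" by auto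
lemma modlin: "(v::nat) = c*e + 7*t \<Longrightarrow> v mod 7 = (c * (e mod 7)) mod 7"
  by (simp add: mod_mult_right_eq)
lemma modlin2: "(v::nat) = e + 2*t \<Longrightarrow> v mod 2 = e mod 2" by simp
lemma vl6: "vl [x0,x1,x2,x3,x4,x5] = 100000*x0+10000*x1+1000*x2+100*x3+10*x4+x5"
  by (simp add: vl_def)
lemma finalcheck: fixes a b r :: nat
  assumes a: "a < 10" and b: "b < 10" and ab: "a \<noteq> b" and r: "r < 7" "r \<noteq> 0"
  and h: "\<forall>v \<in> {vl [b,a,a,a,a,a], vl [a,b,a,a,a,a], vl [a,a,b,a,a,a], vl [a,a,a,b,a,a], vl [a,a,a,a,b,a], vl [a,a,a,a,a,b]}.
         v mod 2 \<noteq> 0 \<and> (r + v mod 7) mod 7 \<noteq> 0"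
  shows False
proof -
  define e where "e = (b + 6*a) mod 7"
  have e: "e < 7" unfolding e_def by simp
  have m0: "(100000*b + 10000*a + 1000*a + 100*a + 10*a + a) mod 7 = (5 * e) mod 7" unfolding e_def
    by (rule modlin[where t="14285*b + 1583*a"]) simp
  have m1: "(100000*a + 10000*b + 1000*a + 100*a + 10*a + a) mod 7 = (4 * e) mod 7" unfolding e_def
    by (rule modlin[where t="1428*b + 14441*a"]) simp
  have m2: "(100000*a + 10000*a + 1000*b + 100*a + 10*a + a) mod 7 = (6 * e) mod 7" unfolding e_def
    by (rule modlin[where t="142*b + 15725*a"]) simp
  have m3: "(100000*a + 10000*a + 1000*a + 100*b + 10*a + a) mod 7 = (2 * e) mod 7" unfolding e_def
    by (rule modlin[where t="14*b + 15857*a"]) simp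
  have m4: "(100000*a + 10000*a + 1000*a + 100*a + 10*b + a) mod 7 = (3 * e) mod 7" unfolding e_def
    by (rule modlin[where t="b + 15869*a"]) simp
  have m5: "(100000*a + 10000*a + 1000*a + 100*a + 10*a + b) mod 7 = (1 * e) mod 7" unfolding e_def
    by (rule modlin[where t="15872*a"]) simp
  have d4: "(100000*a + 10000*a + 1000*a + 100*a + 10*b + a) mod 2 = a mod 2" by (rule modlin2[where t="5*b + 55550*a"]) simp
  have d5: "(100000*a + 10000*a + 1000*a + 100*a + 10*a + b) mod 2 = b mod 2" by (rule modlin2[where t="55555*a"]) simp
  have hs: "(r + (5*e) mod 7) mod 7 \<noteq> 0" "(r + (4*e) mod 7) mod 7 \<noteq> 0" "(r + (6*e) mod 7) mod 7 \<noteq> 0"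
     "(r + (2*e) mod 7) mod 7 \<noteq> 0" "(r + (3*e) mod 7) mod 7 \<noteq> 0" "(r + (1*e) mod 7) mod 7 \<noteq> 0"
    using h by (simp_all only: vl6 m0 m1 m2 m3 m4 m5 insert_iff ball_simps simp_thms)
  have hp: "a mod 2 \<noteq> 0" "b mod 2 \<noteq> 0" using h by (simp_all only: vl6 d4 d5 insert_iff ball_simps simp_thms)
  show False
  proof (cases "e = 0")
    case True
    have "a mod 2 = 0 \<or> b mod 2 = 0"
      using ten[OF a] ten[OF b] ab True unfolding e_def by (elim disjE; simp)
    then show False using hp by auto
  next
    case False
    show False using seven[OF e] seven[OF r(1)] False r(2) hs
      by (elim disjE; simp)
  qed
qed

theorem lemma4:
  fixes a b K N :: nat
  assumes "a < 10" and "b < 10" and "a \<noteq> b" and "K \<ge> 1"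
    and "N = K * 10 ^ 6 + (a * 111110 + b)"
    and "absolute_prime N"
  shows "7 dvd K"
proof (rule ccontr)
  assume n7: "\<not> 7 dvd K"
  have a: "a < 10" and b: "b < 10" and K: "K \<ge> 1" using assms by auto
  define L where "L = digits10 K"
  define m where "m = length L"
  have NN: "N = 10 * (10 * (10 * (10 * (10 * (10 * K + a) + a) + a) + a) + a) + b"
    using assms(5) by simp
  have ds: "digits10 N = L @ [a,a,a,a,a,b]"
  proof -
    have s1: "digits10 (10 * K + a) = digits10 K @ [a]" using a K by (rule digits_step[rotated])
    have s2: "digits10 (10 * (10 * K + a) + a) = digits10 K @ [a,a]" using s1 a K digits_step[of "10*K+a" a] by simp
    have s3: "digits10 (10 * (10 * (10 * K + a) + a) + a) = digits10 K @ [a,a,a]"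
      using s2 a K digits_step[of "10 * (10 * K + a) + a" a] by simp
    have s4: "digits10 (10 * (10 * (10 * (10 * K + a) + a) + a) + a) = digits10 K @ [a,a,a,a]"
      using s3 a K digits_step[of "10 * (10 * (10 * K + a) + a) + a" a] by simp
    have s5: "digits10 (10 * (10 * (10 * (10 * (10 * K + a) + a) + a) + a) + a) = digits10 K @ [a,a,a,a,a]"
      using s4 a K digits_step[of "10 * (10 * (10 * (10 * K + a) + a) + a) + a" a] by simp
    show ?thesis unfolding NN L_def
      using s5 b K digits_step[of "10 * (10 * (10 * (10 * (10 * K + a) + a) + a) + a) + a" b] by simp
  qed
  have vL: "vl L = K" unfolding L_def by (rule vl_digits)
  have len: "length (digits10 N) = m + 6" using ds m_def by simp
  have pr: "\<And>p. p < 6 \<Longrightarrow> prime (vl ((L @ [a,a,a,a,a,b])[m + p := b, m + 5 := (L @ [a,a,a,a,a,b]) ! (m + p)]))"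
  proof -
    fix p :: nat assume p: "p < 6"
    have perm: "Transposition.transpose (m + p) (m + 5) permutes {..<m+6}"
      using p by (intro permutes_swap_id) auto
    have "prime (\<Sum>k<m+6. digits10 N ! (Transposition.transpose (m + p) (m + 5) k) * 10 ^ (m + 6 - 1 - k))"
      using assms(6) perm len unfolding absolute_prime_def Let_def by metis
    also have "(\<Sum>k<m+6. digits10 N ! (Transposition.transpose (m + p) (m + 5) k) * 10 ^ (m + 6 - 1 - k))
       = vl ((digits10 N)[m + p := digits10 N ! (m+5), m + 5 := digits10 N ! (m + p)])"
      using swap_sum[of "m+p" "digits10 N" "m+5"] len p by simp
    finally show "prime (vl ((L @ [a,a,a,a,a,b])[m + p := b, m + 5 := (L @ [a,a,a,a,a,b]) ! (m + p)]))"
      using ds m_def by (simp add: nth_append)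
  qed
  have q0: "prime (K * 10^6 + vl [b,a,a,a,a,a])"
    using pr[of 0] by (simp add: m_def list_update_append nth_append vl_append vL)
  have q1: "prime (K * 10^6 + vl [a,b,a,a,a,a])"
    using pr[of 1] by (simp add: m_def list_update_append nth_append vl_append vL)
  have q2: "prime (K * 10^6 + vl [a,a,b,a,a,a])"
    using pr[of 2] by (simp add: m_def list_update_append nth_append vl_append vL)
  have q3: "prime (K * 10^6 + vl [a,a,a,b,a,a])"
    using pr[of 3] by (simp add: m_def list_update_append nth_append vl_append vL)
  have q4: "prime (K * 10^6 + vl [a,a,a,a,b,a])"
    using pr[of 4] by (simp add: m_def list_update_append nth_append vl_append vL)
  have q5: "prime (K * 10^6 + vl [a,a,a,a,a,b])"
    using pr[of 5] by (simp add: m_def list_update_append nth_append vl_append vL)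
  have small: "\<And>v. prime (K * 10^6 + v) \<Longrightarrow> v mod 2 \<noteq> 0 \<and> (K mod 7 + v mod 7) mod 7 \<noteq> 0"
  proof -
    fix v :: nat assume P: "prime (K * 10^6 + v)"
    have "(10::nat)^6 \<le> K * 10^6" using K by simp
    moreover have "7 < (10::nat)^6" by simp
    ultimately have big: "K * 10^6 + v > 7" by linarith
    have nd: "\<And>q::nat. q \<noteq> 1 \<Longrightarrow> q < K * 10^6 + v \<Longrightarrow> \<not> q dvd (K * 10^6 + v)"
      using P prime_nat_iff by (metis less_not_refl)
    have n2: "\<not> 2 dvd (K * 10^6 + v)" using nd[of 2] big by simp
    have n7: "\<not> 7 dvd (K * 10^6 + v)" using nd[of 7] big by simp
    have e2: "(K * 10^6 + v) mod 2 = v mod 2" by (rule modlin2[where t="K * 500000"]) simp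
    have "(K * 10^6 + v) mod 7 = (K * 10^6 mod 7 + v mod 7) mod 7" by (rule mod_add_eq[symmetric])
    also have "K * 10^6 mod 7 = K mod 7" using modlin[of "K * 10^6" 1 K "K * 142857"] by simp
    finally have e7: "(K * 10^6 + v) mod 7 = (K mod 7 + v mod 7) mod 7" .
    show "v mod 2 \<noteq> 0 \<and> (K mod 7 + v mod 7) mod 7 \<noteq> 0"
      using n2 n7 unfolding dvd_eq_mod_eq_0 e2 e7 by (rule conjI)
  qed
  have r7: "K mod 7 \<noteq> 0" using n7 unfolding dvd_eq_mod_eq_0 .
  show False
    apply (rule finalcheck[OF a b assms(3) _ r7])
     apply simp
    using small[OF q0] small[OF q1] small[OF q2] small[OF q3] small[OF q4] small[OF q5]
    by (simp only: insert_iff ball_simps simp_thms)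
qed

end
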